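(* Let $G$ be a gradual mechanism implementing an SCF $f$. Then $G$ is incentive compatible if and only if for every agent $i\in N$ and all type profiles $\theta^1,\theta^2\in\Theta$ that are both consistent with a common strategy profile $s_{-i}\in S_{-i}$, we have $f(\theta^1)\,R(\theta^1_i)\,f(\theta^2)$.
   Context: Setting. $N$ is a finite set of agents and $X$ a finite set of outcomes. Each agent $i\in N$ has a finite type space $\Theta_i$; each type $\theta_i$ determines a complete and transitive preference $R(\theta_i)$ on $X$. $\Theta=\prod_{i\in N}\Theta_i$. An SCF is a map $f:\Theta\to X$. Dynamic game forms. A dynamic game form with perfect recall consists of a finite tree $\bar H$ of histories (finite sequences of action profiles) containing the empty initial history $\varnothing$, closed under prefixes ($\preceq$ prefix order); terminal histories $Z$, non-terminal $H$; at each $h\in H$ a nonempty set $\mathbb P(h)$ of agents move simultaneously with available actions $A_i(h)$, all action profiles leading to successors; $\mathbb P(\varnothing)=N$; each agent's set $H_i$ of decision nodes is partitioned into information sets $\boldsymbol H_i$, with available actions constant on information sets and perfect recall; $\mathcal X:Z\to X$ the outcome function. A strategy $s_i$ chooses an available action at each information set of $i$; $S_i$ is the set of strategies and for $M\subseteq N$, $s_M$ is a profile of strategies of the agents in $M$ ($s_{-i}$ for $M=N\setminus\{i\}$). A complete profile $s$ determines a terminal history $z(s)$ and $\mathcal X(s)=\mathcal X(z(s))$. Gradual mechanisms. A GM implementing $f$ is such a game form in which (1) actions of $i$ are nonempty subsets of $\Theta_i$; (2) at every $h\in H_i$ the available actions of $i$ are pairwise disjoint with union $\Theta_i(h)$,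 where for any history $h$, $\Theta_i(h)$ is the last action of $i$ in $h$ ($\Theta_i$ if $i$ has not acted); (3) $\mathcal X(z)=f(\theta)$ for all $z\in Z$, $\theta\in\Theta(z)=\prod_i\Theta_i(z)$. The sets $\Theta(z)$, $z\in Z$, partition $\Theta$. Consistency. For $M\subsetneq N$ and $s_M$, a history $h$ is consistent with $s_M$ if $h\preceq z(s_M,s_{N\setminus M})$ for some $s_{N\setminus M}$; a type profile $\theta$ is consistent with $s_M$ if the unique $z\in Z$ with $\theta\in\Theta(z)$ is consistent with $s_M$. Incentive compatibility. A strategy $s_i$ is unconditional for type $\theta_i$ if $\theta_i\in s_i(h)$ for every $h\in H_i$ with $\theta_i\in\Theta_i(h)$; denote such a strategy $s_{\theta_i}$. The GM is incentive compatible if $\mathcal X(s_{\theta_i},s_{-i})\,R(\theta_i)\,\mathcal X(s_i,s_{-i})$ for all $i$, $\theta_i$, unconditional $s_{\theta_i}$ for $\theta_i$, $s_i\in S_i$, $s_{-i}\in S_{-i}$. *)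

theory Defs
  imports Main "HOL-Library.Sublist"
begin

text \<open>Agents: type 'i (finite; N = UNIV).  An action of agent i is a set of types ('t set), as in a gradual
 mechanism.  An action profile at a history records Some action for each mover and None for
 every non-mover; a history is a finite list of action profiles.\<close>

type_synonym ('i,'t) aprof = "'i \<Rightarrow> 't set option"
type_synonym ('i,'t) hist = "('i,'t) aprof list"

record ('i,'t,'x) gform =
  tree   :: "('i,'t) hist set"
  movers :: "('i,'t) hist \<Rightarrow> 'i set"
  acts   :: "'i \<Rightarrow> ('i,'t) hist \<Rightarrow> 't set set"
  info   :: "'i \<Rightarrow> ('i,'t) hist set set"
  outc   :: "('i,'t) hist \<Rightarrow> 'x"

definition nonterminals :: "('i,'t,'x) gform \<Rightarrow> ('i,'t) hist set" where
  "nonterminals G = {h \<in> tree G. \<exists>a. h @ [a] \<in> tree G}"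

definition terminals :: "('i,'t,'x) gform \<Rightarrow> ('i,'t) hist set" where
  "terminals G = tree G - nonterminals G"

definition dec_nodes :: "('i,'t,'x) gform \<Rightarrow> 'i \<Rightarrow> ('i,'t) hist set" where
  "dec_nodes G i = {h \<in> nonterminals G. i \<in> movers G h}"

definition infoset :: "('i,'t,'x) gform \<Rightarrow> 'i \<Rightarrow> ('i,'t) hist \<Rightarrow> ('i,'t) hist set" where
  "infoset G i h = (THE I. I \<in> info G i \<and> h \<in> I)"

definition experience :: "('i,'t,'x) gform \<Rightarrow> 'i \<Rightarrow> ('i,'t) hist \<Rightarrow> (('i,'t) hist set \<times> 't set) list" where
  "experience G i h =
     map (\<lambda>k. (infoset G i (take k h), the ((h ! k) i)))
         (filter (\<lambda>k. (h ! k) i \<noteq> None) [0..<length h])"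

definition game_form :: "('i,'t,'x) gform \<Rightarrow> bool" where
  "game_form G \<longleftrightarrow>
     finite (tree G) \<and> [] \<in> tree G \<and>
     (\<forall>h \<in> tree G. \<forall>h'. prefix h' h \<longrightarrow> h' \<in> tree G) \<and>
     (\<forall>h \<in> nonterminals G.
        movers G h \<noteq> {} \<and> (\<forall>i \<in> movers G h. acts G i h \<noteq> {}) \<and>
        {a. h @ [a] \<in> tree G} =
        {a. \<forall>i. (i \<in> movers G h \<longrightarrow> (\<exists>b \<in> acts G i h. a i = Some b)) \<and>
                 (i \<notin> movers G h \<longrightarrow> a i = None)}) \<and>
     [] \<in> nonterminals G \<and> movers G [] = UNIV \<and>
     (\<forall>i. (\<forall>I \<in> info G i. I \<noteq> {}) \<and> \<Union>(info G i) = dec_nodes G i \<and>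
          (\<forall>I \<in> info G i. \<forall>J \<in> info G i. I \<noteq> J \<longrightarrow> I \<inter> J = {})) \<and>
     (\<forall>i. \<forall>I \<in> info G i. \<forall>h \<in> I. \<forall>h' \<in> I. acts G i h = acts G i h') \<and>
     (\<forall>i. \<forall>I \<in> info G i. \<forall>h \<in> I. \<forall>h' \<in> I. experience G i h = experience G i h')"

definition type_set :: "('i \<Rightarrow> 't set) \<Rightarrow> 'i \<Rightarrow> ('i,'t) hist \<Rightarrow> 't set" where
  "type_set Theta i h =
     (case filter (\<lambda>a. a i \<noteq> None) h of [] \<Rightarrow> Theta i | as \<Rightarrow> the (last as i))"

definition gradual_mechanism ::
  "('i,'t,'x) gform \<Rightarrow> ('i \<Rightarrow> 't set) \<Rightarrow> (('i \<Rightarrow> 't) \<Rightarrow> 'x) \<Rightarrow> bool" where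
  "gradual_mechanism G Theta f \<longleftrightarrow>
     game_form G \<and>
     (\<forall>i. \<forall>h \<in> dec_nodes G i.
        (\<forall>a \<in> acts G i h. a \<noteq> {} \<and> a \<subseteq> Theta i) \<and>
        (\<forall>a \<in> acts G i h. \<forall>b \<in> acts G i h. a \<noteq> b \<longrightarrow> a \<inter> b = {}) \<and>
        \<Union>(acts G i h) = type_set Theta i h) \<and>
     (\<forall>z \<in> terminals G. \<forall>\<theta>. (\<forall>i. \<theta> i \<in> type_set Theta i z) \<longrightarrow> outc G z = f \<theta>)"

text \<open>A strategy of i: an available action at each decision node of i, constant on
  information sets (normalised to {} off the decision nodes of i).\<close>
definition is_strategy :: "('i,'t,'x) gform \<Rightarrow> 'i \<Rightarrow> (('i,'t) hist \<Rightarrow> 't set) \<Rightarrow> bool" where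
  "is_strategy G i s \<longleftrightarrow>
     (\<forall>h \<in> dec_nodes G i. s h \<in> acts G i h) \<and>
     (\<forall>I \<in> info G i. \<forall>h \<in> I. \<forall>h' \<in> I. s h = s h') \<and>
     (\<forall>h. h \<notin> dec_nodes G i \<longrightarrow> s h = {})"

definition prof_act :: "('i,'t,'x) gform \<Rightarrow> ('i \<Rightarrow> ('i,'t) hist \<Rightarrow> 't set) \<Rightarrow> ('i,'t) hist \<Rightarrow> ('i,'t) aprof" where
  "prof_act G s h = (\<lambda>j. if j \<in> movers G h then Some (s j h) else None)"

definition follows :: "('i,'t,'x) gform \<Rightarrow> ('i \<Rightarrow> ('i,'t) hist \<Rightarrow> 't set) \<Rightarrow> ('i,'t) hist \<Rightarrow> bool" where
  "follows G s z \<longleftrightarrow> (\<forall>k < length z. z ! k = prof_act G s (take k z))"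

definition play :: "('i,'t,'x) gform \<Rightarrow> ('i \<Rightarrow> ('i,'t) hist \<Rightarrow> 't set) \<Rightarrow> ('i,'t) hist" where
  "play G s = (THE z. z \<in> terminals G \<and> follows G s z)"

definition outcome :: "('i,'t,'x) gform \<Rightarrow> ('i \<Rightarrow> ('i,'t) hist \<Rightarrow> 't set) \<Rightarrow> 'x" where
  "outcome G s = outc G (play G s)"

definition hist_consistent ::
  "('i,'t,'x) gform \<Rightarrow> 'i set \<Rightarrow> ('i \<Rightarrow> ('i,'t) hist \<Rightarrow> 't set) \<Rightarrow> ('i,'t) hist \<Rightarrow> bool" where
  "hist_consistent G M sM h \<longleftrightarrow>
     (\<exists>s'. (\<forall>j. j \<notin> M \<longrightarrow> is_strategy G j (s' j)) \<and>
           prefix h (play G (\<lambda>j. if j \<in> M then sM j else s' j)))"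

definition type_consistent ::
  "('i,'t,'x) gform \<Rightarrow> ('i \<Rightarrow> 't set) \<Rightarrow> 'i set \<Rightarrow> ('i \<Rightarrow> ('i,'t) hist \<Rightarrow> 't set) \<Rightarrow> ('i \<Rightarrow> 't) \<Rightarrow> bool" where
  "type_consistent G Theta M sM \<theta> \<longleftrightarrow>
     (\<exists>z \<in> terminals G. (\<forall>j. \<theta> j \<in> type_set Theta j z) \<and> hist_consistent G M sM z)"

definition unconditional ::
  "('i,'t,'x) gform \<Rightarrow> ('i \<Rightarrow> 't set) \<Rightarrow> 'i \<Rightarrow> 't \<Rightarrow> (('i,'t) hist \<Rightarrow> 't set) \<Rightarrow> bool" where
  "unconditional G Theta i t s \<longleftrightarrow>
     is_strategy G i s \<and> (\<forall>h \<in> dec_nodes G i. t \<in> type_set Theta i h \<longrightarrow> t \<in> s h)"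

text \<open>R i t x y: x R(t) y, the (weak) preference of type t of agent i.\<close>
definition incentive_compatible ::
  "('i,'t,'x) gform \<Rightarrow> ('i \<Rightarrow> 't set) \<Rightarrow> ('i \<Rightarrow> 't \<Rightarrow> 'x \<Rightarrow> 'x \<Rightarrow> bool) \<Rightarrow> bool" where
  "incentive_compatible G Theta R \<longleftrightarrow>
     (\<forall>i. \<forall>t \<in> Theta i. \<forall>st si s.
        unconditional G Theta i t st \<longrightarrow> is_strategy G i si \<longrightarrow>
        (\<forall>j. j \<noteq> i \<longrightarrow> is_strategy G j (s j)) \<longrightarrow>
        R i t (outcome G (s(i := st))) (outcome G (s(i := si))))"

end

theory Submission
  imports Defs "HOL-Library.Sublist"
begin

lemma gf_parts:
  assumes "game_form G"
  shows "finite (tree G)" "[] \<in> tree G"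
   "\<forall>h \<in> tree G. \<forall>h'. prefix h' h \<longrightarrow> h' \<in> tree G"
   "\<forall>h \<in> nonterminals G.
        movers G h \<noteq> {} \<and> (\<forall>i \<in> movers G h. acts G i h \<noteq> {}) \<and>
        {a. h @ [a] \<in> tree G} =
        {a. \<forall>i. (i \<in> movers G h \<longrightarrow> (\<exists>b \<in> acts G i h. a i = Some b)) \<and>
                 (i \<notin> movers G h \<longrightarrow> a i = None)}"
   "[] \<in> nonterminals G" "movers G [] = UNIV"
   "\<forall>i. (\<forall>I \<in> info G i. I \<noteq> {}) \<and> \<Union>(info G i) = dec_nodes G i \<and>
          (\<forall>I \<in> info G i. \<forall>J \<in> info G i. I \<noteq> J \<longrightarrow> I \<inter> J = {})"
   "\<forall>i. \<forall>I \<in> info G i. \<forall>h \<in> I. \<forall>h' \<in> I. acts G i h = acts G i h'"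
  using assms unfolding game_form_def
  apply -
  apply (elim conjE, assumption)+
  done

lemma gm_parts:
  assumes "gradual_mechanism G Theta f"
  shows "game_form G"
   "\<forall>i. \<forall>h \<in> dec_nodes G i.
        (\<forall>a \<in> acts G i h. a \<noteq> {} \<and> a \<subseteq> Theta i) \<and>
        (\<forall>a \<in> acts G i h. \<forall>b \<in> acts G i h. a \<noteq> b \<longrightarrow> a \<inter> b = {}) \<and>
        \<Union>(acts G i h) = type_set Theta i h"
   "\<forall>z \<in> terminals G. \<forall>\<theta>. (\<forall>i. \<theta> i \<in> type_set Theta i z) \<longrightarrow> outc G z = f \<theta>"
  using assms unfolding gradual_mechanism_def
  apply -
  apply (elim conjE, assumption)+
  done

lemma gf_tree_prefix:
  "game_form G \<Longrightarrow> h \<in> tree G \<Longrightarrow> prefix h' h \<Longrightarrow> h' \<in> tree G"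
  using gf_parts(3) by blast

lemma gm_gf: "gradual_mechanism G Theta f \<Longrightarrow> game_form G"
  by (rule gm_parts(1))

lemma gf_root: "game_form G \<Longrightarrow> [] \<in> nonterminals G \<and> movers G [] = UNIV"
  using gf_parts(5,6) by blast

lemma gf_nt_acts: "game_form G \<Longrightarrow> h \<in> nonterminals G \<Longrightarrow> i \<in> movers G h \<Longrightarrow> acts G i h \<noteq> {}"
  using gf_parts(4) by blast

lemma gf_info: "game_form G \<Longrightarrow> \<Union>(info G i) = dec_nodes G i"
  using gf_parts(7) by blast

lemma gf_acts_info: "game_form G \<Longrightarrow> I \<in> info G i \<Longrightarrow> h \<in> I \<Longrightarrow> h' \<in> I \<Longrightarrow> acts G i h = acts G i h'"
  using gf_parts(8) by blast

lemma gm_acts: "gradual_mechanism G Theta f \<Longrightarrow> h \<in> dec_nodes G i \<Longrightarrow>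
   (\<forall>a \<in> acts G i h. a \<noteq> {} \<and> a \<subseteq> Theta i) \<and> \<Union>(acts G i h) = type_set Theta i h"
  using gm_parts(2) by blast

lemma gm_outc: "gradual_mechanism G Theta f \<Longrightarrow> z \<in> terminals G \<Longrightarrow> \<forall>i. \<theta> i \<in> type_set Theta i z \<Longrightarrow> outc G z = f \<theta>"
  using gm_parts(3) by blast

lemma gf_succset: "game_form G \<Longrightarrow> h \<in> nonterminals G \<Longrightarrow> {a. h @ [a] \<in> tree G} =
        {a. \<forall>i. (i \<in> movers G h \<longrightarrow> (\<exists>b \<in> acts G i h. a i = Some b)) \<and>
                 (i \<notin> movers G h \<longrightarrow> a i = None)}"
  using gf_parts(4) by blast

lemma gf_succ:
  assumes "game_form G" "h @ [a] \<in> tree G"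
  shows "h \<in> nonterminals G \<and> (\<forall>i. (i \<in> movers G h \<longrightarrow> (\<exists>b\<in>acts G i h. a i = Some b)) \<and>
                                   (i \<notin> movers G h \<longrightarrow> a i = None))"
proof -
  have h: "h \<in> tree G" using gf_tree_prefix[OF assms(1,2)] by simp
  hence nt: "h \<in> nonterminals G" using assms(2) unfolding nonterminals_def by blast
  have "a \<in> {a. h @ [a] \<in> tree G}" using assms(2) by simp
  with gf_succset[OF assms(1) nt] have "\<forall>i. (i \<in> movers G h \<longrightarrow> (\<exists>b \<in> acts G i h. a i = Some b)) \<and>
                 (i \<notin> movers G h \<longrightarrow> a i = None)" by blast
  with nt show ?thesis by blast
qed

lemma gf_succ_intro:
  assumes "game_form G" "h \<in> nonterminals G"
    "\<forall>i. (i \<in> movers G h \<longrightarrow> (\<exists>b\<in>acts G i h. a i = Some b)) \<and> (i \<notin> movers G h \<longrightarrow> a i = None)"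
  shows "h @ [a] \<in> tree G"
proof -
  have "{a. h @ [a] \<in> tree G} =
        {a. \<forall>i. (i \<in> movers G h \<longrightarrow> (\<exists>b \<in> acts G i h. a i = Some b)) \<and>
                 (i \<notin> movers G h \<longrightarrow> a i = None)}"
    using gf_succset[OF assms(1,2)] .
  with assms(3) show ?thesis by blast
qed

lemma term_prefix_eq:
  assumes "game_form G" "z \<in> terminals G" "z' \<in> tree G" "prefix z z'"
  shows "z = z'"
proof (rule ccontr)
  assume "z \<noteq> z'"
  with assms(4) have sp: "strict_prefix z z'" by simp
  hence lt: "length z < length z'" by (rule prefix_length_less)
  obtain zs where zs: "z' = z @ zs" using assms(4) prefix_def by blast
  have tz: "take (length z) z' = z" using zs by simp
  have "z @ [z' ! length z] = take (Suc (length z)) z'"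
    using take_Suc_conv_app_nth[OF lt] tz by simp
  hence "prefix (z @ [z' ! length z]) z'" by (simp add: take_is_prefix)
  hence "z @ [z' ! length z] \<in> tree G" using gf_tree_prefix assms(1,3) by blast
  moreover have "z \<in> tree G" using assms(2) by (simp add: terminals_def)
  ultimately have "z \<in> nonterminals G" unfolding nonterminals_def by blast
  with assms(2) show False by (simp add: terminals_def)
qed

lemma type_set_Nil[simp]: "type_set Theta i [] = Theta i"
  unfolding type_set_def by simp

lemma type_set_snoc:
  "type_set Theta i (h @ [a]) = (case a i of None \<Rightarrow> type_set Theta i h | Some b \<Rightarrow> b)"
proof (cases "a i")
  case None
  then show ?thesis unfolding type_set_def by simp
next
  case (Some b)
  then show ?thesis unfolding type_set_def
    by (cases "filter (\<lambda>a. a i \<noteq> None) h") simp_all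
qed

lemma type_set_step:
  assumes GM: "gradual_mechanism G Theta f" and "h @ [a] \<in> tree G"
  shows "type_set Theta i (h @ [a]) \<subseteq> type_set Theta i h"
proof -
  have gf: "game_form G" using GM by (rule gm_gf)
  note s = gf_succ[OF gf assms(2)]
  show ?thesis
  proof (cases "i \<in> movers G h")
    case True
    then obtain b where b: "b \<in> acts G i h" "a i = Some b" using s by blast
    have "h \<in> dec_nodes G i" using s True unfolding dec_nodes_def by blast
    hence "\<Union>(acts G i h) = type_set Theta i h" using gm_acts[OF GM] by blast
    with b show ?thesis by (auto simp: type_set_snoc)
  next
    case False
    then show ?thesis using s by (auto simp: type_set_snoc)
  qed
qed

lemma type_set_mono:
  assumes GM: "gradual_mechanism G Theta f"
  shows "z \<in> tree G \<Longrightarrow> prefix h z \<Longrightarrow> type_set Theta i z \<subseteq> type_set Theta i h"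
proof (induction z rule: rev_induct)
  case Nil
  then show ?case by simp
next
  case (snoc a z)
  have gf: "game_form G" using GM by (rule gm_gf)
  have zt: "z \<in> tree G" using gf_tree_prefix[OF gf snoc.prems(1)] by simp
  have st: "type_set Theta i (z @ [a]) \<subseteq> type_set Theta i z" using type_set_step[OF GM snoc.prems(1)] .
  from snoc.prems(2) have "h = z @ [a] \<or> prefix h z" by simp
  then show ?case using snoc.IH[OF zt] st by blast
qed

lemma type_set_nonempty:
  assumes GM: "gradual_mechanism G Theta f"
  shows "z \<in> tree G \<Longrightarrow> type_set Theta i z \<noteq> {}"
proof (induction z rule: rev_induct)
  case Nil
  have gf: "game_form G" using GM by (rule gm_gf)
  have "[] \<in> dec_nodes G i" using gf_root[OF gf] unfolding dec_nodes_def by auto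
  moreover have "acts G i [] \<noteq> {}" using gf_nt_acts[OF gf] gf_root[OF gf] by blast
  ultimately obtain a where "a \<in> acts G i []" "a \<noteq> {}" using gm_acts[OF GM] by blast
  then show ?case using gm_acts[OF GM \<open>[] \<in> dec_nodes G i\<close>] by auto
next
  case (snoc a z)
  have gf: "game_form G" using GM by (rule gm_gf)
  have zt: "z \<in> tree G" using gf_tree_prefix[OF gf snoc.prems(1)] by simp
  note s = gf_succ[OF gf snoc.prems(1)]
  show ?case
  proof (cases "i \<in> movers G z")
    case True
    then obtain b where b: "b \<in> acts G i z" "a i = Some b" using s by blast
    have "z \<in> dec_nodes G i" using s True unfolding dec_nodes_def by blast
    hence "b \<noteq> {}" using gm_acts[OF GM] b by blast
    with b show ?thesis by (auto simp: type_set_snoc)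
  next
    case False
    then show ?thesis using s snoc.IH[OF zt] by (auto simp: type_set_snoc)
  qed
qed

lemma type_set_sub:
  assumes GM: "gradual_mechanism G Theta f" "z \<in> tree G"
  shows "type_set Theta i z \<subseteq> Theta i"
  using type_set_mono[OF GM, of "[]"] by simp


lemma follows_take:
  "follows G s z \<Longrightarrow> k \<le> length z \<Longrightarrow> follows G s (take k z)"
  unfolding follows_def by (simp add: min_def)

lemma follows_snoc:
  "follows G s (h @ [a]) \<longleftrightarrow> follows G s h \<and> a = prof_act G s h"
  unfolding follows_def
  by (auto simp: nth_append less_Suc_eq) 

lemma follows_take_eq:
  "follows G s z \<Longrightarrow> follows G s z' \<Longrightarrow> n \<le> length z \<Longrightarrow> n \<le> length z' \<Longrightarrow> take n z = take n z'"
proof (induction n)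
  case 0
  then show ?case by simp
next
  case (Suc n)
  have l: "n < length z" "n < length z'" using Suc.prems by auto
  have "z ! n = prof_act G s (take n z)" using Suc.prems(1) l unfolding follows_def by blast
  moreover have "z' ! n = prof_act G s (take n z')" using Suc.prems(2) l unfolding follows_def by blast
  moreover have "take n z = take n z'" using Suc by simp
  ultimately show ?case using take_Suc_conv_app_nth[OF l(1)] take_Suc_conv_app_nth[OF l(2)] by simp
qed

lemma follows_unique:
  assumes gf: "game_form G" and z: "z \<in> terminals G" "follows G s z"
    and z': "z' \<in> terminals G" "follows G s z'"
  shows "z = z'"
proof (cases "length z \<le> length z'")
  case True
  have "take (length z) z' = z" using follows_take_eq[OF z(2) z'(2), of "length z"] True by simp
  hence "prefix z z'" by (metis take_is_prefix)
  moreover have "z' \<in> tree G" using z'(1) unfolding terminals_def by blast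
  ultimately show ?thesis using term_prefix_eq[OF gf z(1)] by blast
next
  case False
  have "take (length z') z = z'" using follows_take_eq[OF z(2) z'(2), of "length z'"] False by simp
  hence "prefix z' z" by (metis take_is_prefix)
  moreover have "z \<in> tree G" using z(1) unfolding terminals_def by blast
  ultimately have "z' = z" using term_prefix_eq[OF gf z'(1)] by blast
  then show ?thesis by simp
qed

lemma follows_exists:
  assumes gf: "game_form G" and st: "\<And>j. is_strategy G j (s j)"
  shows "\<exists>z. z \<in> terminals G \<and> follows G s z"
proof -
  define F where "F = {h \<in> tree G. follows G s h}"
  have ft: "finite (tree G)" using gf_parts(1)[OF gf] .
  have fin: "finite F" unfolding F_def using ft by simp
  have ne: "[] \<in> F" using gf_root[OF gf] unfolding F_def nonterminals_def follows_def by auto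
  obtain h where h: "h \<in> F" "\<And>h'. h' \<in> F \<Longrightarrow> length h' \<le> length h"
  proof -
    have "\<exists>x. (x \<in> length ` F) \<and> (\<forall>y. y \<in> length ` F \<longrightarrow> y \<le> x)"
    proof (intro exI[of _ "Max (length ` F)"] conjI allI impI)
      show "Max (length ` F) \<in> length ` F" using fin ne by (intro Max_in) auto
      fix y assume "y \<in> length ` F" then show "y \<le> Max (length ` F)" using fin by simp
    qed
    then show ?thesis using that by blast
  qed
  have "h \<in> terminals G"
  proof (rule ccontr)
    assume "h \<notin> terminals G"
    hence nt: "h \<in> nonterminals G" using h(1) unfolding F_def terminals_def by blast
    have "h @ [prof_act G s h] \<in> tree G"
    proof (rule gf_succ_intro[OF gf nt], intro allI conjI impI)
      fix i assume "i \<in> movers G h"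
      hence "h \<in> dec_nodes G i" using nt unfolding dec_nodes_def by blast
      hence "s i h \<in> acts G i h" using st[of i] unfolding is_strategy_def by blast
      then show "\<exists>b\<in>acts G i h. prof_act G s h i = Some b"
        using \<open>i \<in> movers G h\<close> unfolding prof_act_def by auto
    next
      fix i assume "i \<notin> movers G h"
      then show "prof_act G s h i = None" unfolding prof_act_def by auto
    qed
    hence "h @ [prof_act G s h] \<in> F" using h(1) unfolding F_def by (simp add: follows_snoc)
    from h(2)[OF this] show False by simp
  qed
  then show ?thesis using h(1) unfolding F_def by blast
qed

lemma play_props:
  assumes gf: "game_form G" and st: "\<And>j. is_strategy G j (s j)"
  shows "play G s \<in> terminals G \<and> follows G s (play G s)"
proof -
  obtain z where z: "z \<in> terminals G" "follows G s z" using follows_exists[OF gf st] by blast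
  have "\<exists>!z. z \<in> terminals G \<and> follows G s z"
    using z follows_unique[OF gf] by blast
  then show ?thesis unfolding play_def by (rule theI')
qed

lemma play_eq:
  assumes gf: "game_form G" and z: "z \<in> terminals G" "follows G s z"
  shows "play G s = z"
  unfolding play_def
  by (rule the_equality) (use z follows_unique[OF gf] in blast)+

lemma follows_nth:
  "follows G s z \<Longrightarrow> k < length z \<Longrightarrow> z ! k = prof_act G s (take k z)"
  unfolding follows_def by blast

lemma take_nt:
  assumes gf: "game_form G" and "z \<in> tree G" "k < length z"
  shows "take k z \<in> nonterminals G"
proof -
  have "take (Suc k) z \<in> tree G" using gf_tree_prefix[OF gf assms(2)] by (simp add: take_is_prefix)
  hence "take k z @ [z ! k] \<in> tree G" using take_Suc_conv_app_nth[OF assms(3)] by simp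
  then show ?thesis using gf_succ[OF gf] by blast
qed


lemma uncond_type:
  assumes GM: "gradual_mechanism G Theta f" and z: "z \<in> terminals G" "follows G s z"
    and un: "unconditional G Theta i t (s i)" and t: "t \<in> Theta i"
  shows "t \<in> type_set Theta i z"
proof -
  have gf: "game_form G" using GM by (rule gm_gf)
  have zt: "z \<in> tree G" using z(1) by (simp add: terminals_def)
  have "k \<le> length z \<Longrightarrow> t \<in> type_set Theta i (take k z)" for k
  proof (induction k)
    case 0
    then show ?case using t by simp
  next
    case (Suc k)
    hence l: "k < length z" by simp
    have e: "take (Suc k) z = take k z @ [z ! k]" using take_Suc_conv_app_nth[OF l] .
    have zk: "z ! k = prof_act G s (take k z)" using follows_nth[OF z(2) l] .
    have nt: "take k z \<in> nonterminals G" using take_nt[OF gf zt l] .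
    have IH: "t \<in> type_set Theta i (take k z)" using Suc l by simp
    show ?case
    proof (cases "i \<in> movers G (take k z)")
      case True
      hence "take k z \<in> dec_nodes G i" using nt unfolding dec_nodes_def by blast
      hence "t \<in> s i (take k z)" using un IH unfolding unconditional_def by blast
      then show ?thesis using True by (simp add: e zk type_set_snoc prof_act_def)
    next
      case False
      then show ?thesis using IH by (simp add: e zk type_set_snoc prof_act_def)
    qed
  qed
  from this[of "length z"] show ?thesis by simp
qed

lemma follows_change:
  assumes GM: "gradual_mechanism G Theta f" and z: "z \<in> terminals G" "follows G (s(i := s0)) z"
    and t: "t \<in> type_set Theta i z"
    and ag: "\<And>h. h \<in> dec_nodes G i \<Longrightarrow> t \<in> s0 h \<Longrightarrow> s1 h = s0 h"
  shows "follows G (s(i := s1)) z"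
  unfolding follows_def
proof (intro allI impI)
  fix k assume l: "k < length z"
  have gf: "game_form G" using GM by (rule gm_gf)
  have zt: "z \<in> tree G" using z(1) by (simp add: terminals_def)
  have zk: "z ! k = prof_act G (s(i := s0)) (take k z)" using follows_nth[OF z(2) l] .
  have nt: "take k z \<in> nonterminals G" using take_nt[OF gf zt l] .
  have e: "take (Suc k) z = take k z @ [z ! k]" using take_Suc_conv_app_nth[OF l] .
  have "prof_act G (s(i := s0)) (take k z) = prof_act G (s(i := s1)) (take k z)"
  proof (cases "i \<in> movers G (take k z)")
    case True
    hence dn: "take k z \<in> dec_nodes G i" using nt unfolding dec_nodes_def by blast
    have "type_set Theta i z \<subseteq> type_set Theta i (take (Suc k) z)"
      using type_set_mono[OF GM zt] by (simp add: take_is_prefix)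
    also have "\<dots> = s0 (take k z)" using True by (simp add: e zk type_set_snoc prof_act_def)
    finally have "t \<in> s0 (take k z)" using t by blast
    then have "s1 (take k z) = s0 (take k z)" using ag dn by blast
    then show ?thesis unfolding prof_act_def by (auto simp: fun_eq_iff)
  next
    case False
    then show ?thesis unfolding prof_act_def by (auto simp: fun_eq_iff)
  qed
  then show "z ! k = prof_act G (s(i := s1)) (take k z)" using zk by simp
qed

lemma type_set_info:
  assumes GM: "gradual_mechanism G Theta f" and I: "I \<in> info G i" "h \<in> I" "h' \<in> I"
  shows "type_set Theta i h = type_set Theta i h'"
proof -
  have gf: "game_form G" using GM by (rule gm_gf)
  have d: "h \<in> dec_nodes G i" "h' \<in> dec_nodes G i" using gf_info[OF gf, of i] I by blast+
  have "acts G i h = acts G i h'" using gf_acts_info[OF gf I] .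
  then show ?thesis using gm_acts[OF GM d(1)] gm_acts[OF GM d(2)] by simp
qed

lemma make_uncond:
  assumes GM: "gradual_mechanism G Theta f" and s0: "is_strategy G i s0"
  shows "\<exists>s1. unconditional G Theta i t s1 \<and> (\<forall>h. h \<in> dec_nodes G i \<longrightarrow> t \<in> s0 h \<longrightarrow> s1 h = s0 h)"
proof -
  have gf: "game_form G" using GM by (rule gm_gf)
  define s1 where "s1 h = (if h \<in> dec_nodes G i \<and> t \<in> type_set Theta i h \<and> t \<notin> s0 h
      then (SOME a. a \<in> acts G i h \<and> t \<in> a) else s0 h)" for h
  have some: "(SOME a. a \<in> acts G i h \<and> t \<in> a) \<in> acts G i h \<and> t \<in> (SOME a. a \<in> acts G i h \<and> t \<in> a)"
    if "h \<in> dec_nodes G i" "t \<in> type_set Theta i h" for h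
  proof -
    have "\<exists>a. a \<in> acts G i h \<and> t \<in> a" using gm_acts[OF GM that(1)] that(2) by blast
    then show ?thesis by (rule someI_ex)
  qed
  have "is_strategy G i s1"
    unfolding is_strategy_def
  proof (intro conjI ballI allI impI)
    fix h assume "h \<in> dec_nodes G i"
    then show "s1 h \<in> acts G i h" using some s0 unfolding s1_def is_strategy_def by auto
  next
    fix I h h' assume I: "I \<in> info G i" "h \<in> I" "h' \<in> I"
    have d: "h \<in> dec_nodes G i" "h' \<in> dec_nodes G i" using gf_info[OF gf, of i] I by blast+
    have "acts G i h = acts G i h'" using gf_acts_info[OF gf I] .
    moreover have "type_set Theta i h = type_set Theta i h'" using type_set_info[OF GM I] .
    moreover have "s0 h = s0 h'" using s0 I unfolding is_strategy_def by blast
    ultimately show "s1 h = s1 h'" using d unfolding s1_def by simp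
  next
    fix h assume "h \<notin> dec_nodes G i"
    then show "s1 h = {}" using s0 unfolding s1_def is_strategy_def by auto
  qed
  moreover have "\<forall>h \<in> dec_nodes G i. t \<in> type_set Theta i h \<longrightarrow> t \<in> s1 h"
    using some unfolding s1_def by auto
  ultimately show ?thesis unfolding unconditional_def s1_def by auto
qed


lemma upd_strats:
  "(\<And>j. j \<noteq> i \<Longrightarrow> is_strategy G j (s j)) \<Longrightarrow> is_strategy G i si \<Longrightarrow> is_strategy G j ((s(i := si)) j)"
  by (cases "j = i") auto

lemma prof_eq: "(\<lambda>j. if j \<in> - {i} then s j else s' j) = s(i := s' i)"
  by (auto simp: fun_eq_iff)

lemma tc_obtain:
  assumes GM: "gradual_mechanism G Theta f" and st: "\<forall>j. j \<noteq> i \<longrightarrow> is_strategy G j (s j)"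
    and c: "type_consistent G Theta (- {i}) s \<theta>"
  shows "\<exists>s0 z. is_strategy G i s0 \<and> z = play G (s(i := s0)) \<and> z \<in> terminals G \<and>
           follows G (s(i := s0)) z \<and> (\<forall>j. \<theta> j \<in> type_set Theta j z)"
proof -
  have gf: "game_form G" using GM by (rule gm_gf)
  obtain z s' where z: "z \<in> terminals G" "\<forall>j. \<theta> j \<in> type_set Theta j z"
    and s': "is_strategy G i (s' i)" and p: "prefix z (play G (s(i := s' i)))"
    using c unfolding type_consistent_def hist_consistent_def prof_eq by auto
  have strs: "\<And>j. is_strategy G j ((s(i := s' i)) j)" using upd_strats[of i G s "s' i"] st s' by blast
  note pp = play_props[of G "s(i := s' i)", OF gf strs]
  have "play G (s(i := s' i)) \<in> tree G" using pp unfolding terminals_def by blast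
  then have "z = play G (s(i := s' i))"
    using term_prefix_eq[OF gf z(1) _ p] by blast
  then show ?thesis using z s' pp by auto
qed

theorem proposition4:
  fixes Theta :: "'i::finite \<Rightarrow> 't set"
    and X :: "'x set"
    and R :: "'i \<Rightarrow> 't \<Rightarrow> 'x \<Rightarrow> 'x \<Rightarrow> bool"
    and f :: "('i \<Rightarrow> 't) \<Rightarrow> 'x"
    and G :: "('i,'t,'x) gform"
  assumes fin_types: "\<And>i. finite (Theta i)"
    and fin_X: "finite X"
    and R_complete: "\<And>i t x y. t \<in> Theta i \<Longrightarrow> x \<in> X \<Longrightarrow> y \<in> X \<Longrightarrow> R i t x y \<or> R i t y x"
    and R_trans: "\<And>i t x y z. t \<in> Theta i \<Longrightarrow> x \<in> X \<Longrightarrow> y \<in> X \<Longrightarrow> z \<in> X \<Longrightarrow>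
                     R i t x y \<Longrightarrow> R i t y z \<Longrightarrow> R i t x z"
    and f_X: "\<And>\<theta>. \<forall>j. \<theta> j \<in> Theta j \<Longrightarrow> f \<theta> \<in> X"
    and outc_X: "\<And>z. z \<in> terminals G \<Longrightarrow> outc G z \<in> X"
    and GM: "gradual_mechanism G Theta f"
  shows "incentive_compatible G Theta R \<longleftrightarrow>
    (\<forall>i \<theta>1 \<theta>2. (\<forall>j. \<theta>1 j \<in> Theta j) \<longrightarrow> (\<forall>j. \<theta>2 j \<in> Theta j) \<longrightarrow>
       (\<exists>s. (\<forall>j. j \<noteq> i \<longrightarrow> is_strategy G j (s j)) \<and>
            type_consistent G Theta (- {i}) s \<theta>1 \<and> type_consistent G Theta (- {i}) s \<theta>2) \<longrightarrow>
       R i (\<theta>1 i) (f \<theta>1) (f \<theta>2))"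
proof
  have gf: "game_form G" using GM by (rule gm_gf)
  assume IC: "incentive_compatible G Theta R"
  show "\<forall>i \<theta>1 \<theta>2. (\<forall>j. \<theta>1 j \<in> Theta j) \<longrightarrow> (\<forall>j. \<theta>2 j \<in> Theta j) \<longrightarrow>
       (\<exists>s. (\<forall>j. j \<noteq> i \<longrightarrow> is_strategy G j (s j)) \<and>
            type_consistent G Theta (- {i}) s \<theta>1 \<and> type_consistent G Theta (- {i}) s \<theta>2) \<longrightarrow>
       R i (\<theta>1 i) (f \<theta>1) (f \<theta>2)"
  proof (intro allI impI)
    fix i \<theta>1 \<theta>2
    assume th1: "\<forall>j. \<theta>1 j \<in> Theta j" and th2: "\<forall>j. \<theta>2 j \<in> Theta j"
      and "\<exists>s. (\<forall>j. j \<noteq> i \<longrightarrow> is_strategy G j (s j)) \<and>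
            type_consistent G Theta (- {i}) s \<theta>1 \<and> type_consistent G Theta (- {i}) s \<theta>2"
    then obtain s where st: "\<forall>j. j \<noteq> i \<longrightarrow> is_strategy G j (s j)"
      and c1: "type_consistent G Theta (- {i}) s \<theta>1" and c2: "type_consistent G Theta (- {i}) s \<theta>2"
      by blast
    obtain s1 z1 where A: "is_strategy G i s1" "z1 = play G (s(i := s1))" "z1 \<in> terminals G"
           "follows G (s(i := s1)) z1" "\<forall>j. \<theta>1 j \<in> type_set Theta j z1"
      using tc_obtain[OF GM st c1] by blast
    obtain s2 z2 where B: "is_strategy G i s2" "z2 = play G (s(i := s2))" "z2 \<in> terminals G"
           "follows G (s(i := s2)) z2" "\<forall>j. \<theta>2 j \<in> type_set Theta j z2"
      using tc_obtain[OF GM st c2] by blast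
    obtain su where su: "unconditional G Theta i (\<theta>1 i) su"
      "\<forall>h. h \<in> dec_nodes G i \<longrightarrow> \<theta>1 i \<in> s1 h \<longrightarrow> su h = s1 h"
      using make_uncond[OF GM A(1)] by blast
    have "follows G (s(i := su)) z1"
      using follows_change[OF GM A(3) A(4)] A(5) su(2) by blast
    hence pu: "play G (s(i := su)) = z1" using play_eq[OF gf A(3)] by blast
    have "R i (\<theta>1 i) (outcome G (s(i := su))) (outcome G (s(i := s2)))"
      using IC th1 su(1) B(1) st unfolding incentive_compatible_def by blast
    moreover have "outcome G (s(i := su)) = f \<theta>1"
      using pu gm_outc[OF GM A(3) A(5)] unfolding outcome_def by simp
    moreover have "outcome G (s(i := s2)) = f \<theta>2"
      using B(2) gm_outc[OF GM B(3) B(5)] unfolding outcome_def by simp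
    ultimately show "R i (\<theta>1 i) (f \<theta>1) (f \<theta>2)" by simp
  qed
next
  have gf: "game_form G" using GM by (rule gm_gf)
  assume C: "\<forall>i \<theta>1 \<theta>2. (\<forall>j. \<theta>1 j \<in> Theta j) \<longrightarrow> (\<forall>j. \<theta>2 j \<in> Theta j) \<longrightarrow>
       (\<exists>s. (\<forall>j. j \<noteq> i \<longrightarrow> is_strategy G j (s j)) \<and>
            type_consistent G Theta (- {i}) s \<theta>1 \<and> type_consistent G Theta (- {i}) s \<theta>2) \<longrightarrow>
       R i (\<theta>1 i) (f \<theta>1) (f \<theta>2)"
  show "incentive_compatible G Theta R"
    unfolding incentive_compatible_def
  proof (intro allI ballI impI)
    fix i t st si s
    assume t: "t \<in> Theta i" and un: "unconditional G Theta i t st" and si: "is_strategy G i si"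
      and sj: "\<forall>j. j \<noteq> i \<longrightarrow> is_strategy G j (s j)"
    have stst: "is_strategy G i st" using un unfolding unconditional_def by blast
    have str1: "\<And>j. is_strategy G j ((s(i := st)) j)" using upd_strats[of i G s st] sj stst by blast
    have str2: "\<And>j. is_strategy G j ((s(i := si)) j)" using upd_strats[of i G s si] sj si by blast
    define z1 where "z1 = play G (s(i := st))"
    define z2 where "z2 = play G (s(i := si))"
    have p1: "z1 \<in> terminals G" "follows G (s(i := st)) z1" using play_props[of G "s(i := st)", OF gf str1] z1_def by auto
    have p2: "z2 \<in> terminals G" "follows G (s(i := si)) z2" using play_props[of G "s(i := si)", OF gf str2] z2_def by auto
    have z1t: "z1 \<in> tree G" "z2 \<in> tree G" using p1 p2 by (auto simp: terminals_def)
    have tz1: "t \<in> type_set Theta i z1" using uncond_type[OF GM p1] un t by simp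
    define \<theta>1 where "\<theta>1 = (\<lambda>j. if j = i then t else SOME x. x \<in> type_set Theta j z1)"
    define \<theta>2 where "\<theta>2 = (\<lambda>j. SOME x. x \<in> type_set Theta j z2)"
    have a1: "\<forall>j. \<theta>1 j \<in> type_set Theta j z1"
    proof
      fix j show "\<theta>1 j \<in> type_set Theta j z1"
      proof (cases "j = i")
        case True then show ?thesis using tz1 \<theta>1_def by simp
      next
        case False
        have "\<exists>x. x \<in> type_set Theta j z1" using type_set_nonempty[OF GM z1t(1)] by blast
        then have "(SOME x. x \<in> type_set Theta j z1) \<in> type_set Theta j z1" by (rule someI_ex)
        then show ?thesis using False \<theta>1_def by simp
      qed
    qed
    have a2: "\<forall>j. \<theta>2 j \<in> type_set Theta j z2"
    proof
      fix j
      have "\<exists>x. x \<in> type_set Theta j z2" using type_set_nonempty[OF GM z1t(2)] by blast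
      then have "(SOME x. x \<in> type_set Theta j z2) \<in> type_set Theta j z2" by (rule someI_ex)
      then show "\<theta>2 j \<in> type_set Theta j z2" using \<theta>2_def by simp
    qed
    have b1: "\<forall>j. \<theta>1 j \<in> Theta j" using a1 type_set_sub[OF GM z1t(1)] by blast
    have b2: "\<forall>j. \<theta>2 j \<in> Theta j" using a2 type_set_sub[OF GM z1t(2)] by blast
    have c1: "type_consistent G Theta (- {i}) s \<theta>1"
    proof -
      have eq: "(\<lambda>j. if j \<in> - {i} then s j else (s(i := st)) j) = s(i := st)" by (auto simp: fun_eq_iff)
      have "hist_consistent G (- {i}) s z1"
        unfolding hist_consistent_def
      proof (rule exI[of _ "s(i := st)"], rule conjI)
        show "\<forall>j. j \<notin> - {i} \<longrightarrow> is_strategy G j ((s(i := st)) j)" using stst by simp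
        show "prefix z1 (play G (\<lambda>j. if j \<in> - {i} then s j else (s(i := st)) j))"
          unfolding eq z1_def by simp
      qed
      then show ?thesis unfolding type_consistent_def using p1(1) a1 by blast
    qed
    have c2: "type_consistent G Theta (- {i}) s \<theta>2"
    proof -
      have eq: "(\<lambda>j. if j \<in> - {i} then s j else (s(i := si)) j) = s(i := si)" by (auto simp: fun_eq_iff)
      have "hist_consistent G (- {i}) s z2"
        unfolding hist_consistent_def
      proof (rule exI[of _ "s(i := si)"], rule conjI)
        show "\<forall>j. j \<notin> - {i} \<longrightarrow> is_strategy G j ((s(i := si)) j)" using si by simp
        show "prefix z2 (play G (\<lambda>j. if j \<in> - {i} then s j else (s(i := si)) j))"
          unfolding eq z2_def by simp
      qed
      then show ?thesis unfolding type_consistent_def using p2(1) a2 by blast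
    qed
    have "R i (\<theta>1 i) (f \<theta>1) (f \<theta>2)" using C b1 b2 sj c1 c2 by blast
    moreover have "f \<theta>1 = outcome G (s(i := st))"
      using gm_outc[OF GM p1(1) a1] z1_def unfolding outcome_def by simp
    moreover have "f \<theta>2 = outcome G (s(i := si))"
      using gm_outc[OF GM p2(1) a2] z2_def unfolding outcome_def by simp
    ultimately show "R i t (outcome G (s(i := st))) (outcome G (s(i := si)))" using \<theta>1_def by simp
  qed
qed

end
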